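(* Let $R$ be a ring. The following are equivalent: (1) $R$ is feckly clean; (2) for any disjoint closed sets $A,B$ of $\operatorname{Max}(R)$ there exists $e\in R$ such that $A\subseteq V(e)$, $B\subseteq V(1-e)$ and $eR(1-e)\subseteq J(R)$; (3) for any $a\in R$ there exists $e\in R$ such that $V(a)\subseteq V(e)$, $V(1-a)\subseteq V(1-e)$ and $eR(1-e)\subseteq J(R)$.
   Context: Rings are associative with identity, not necessarily commutative; $J(R)$ is the Jacobson radical. An element $u\in R$ is full if $RuR=R$. An element $a\in R$ is feckly clean if there exist $e\in R$ and a full element $u\in R$ with $a=e+u$ and $eR(1-e)\subseteq J(R)$; $R$ is feckly clean if every element is feckly clean. $\operatorname{Max}(R)$ is the set of all maximal (two-sided) ideals of $R$, topologized so that the closed sets are exactly the sets $V(I)=\{P\in\operatorname{Max}(R): I\subseteq P\}$ for ideals $I$ of $R$. For $a\in R$, $V(a)=V(RaR)$. *)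

theory Defs
  imports Main
begin

definition left_ideal :: "'a::ring_1 set \<Rightarrow> bool" where
  "left_ideal I \<longleftrightarrow> 0 \<in> I \<and> (\<forall>x\<in>I. \<forall>y\<in>I. x + y \<in> I) \<and> (\<forall>x\<in>I. - x \<in> I)
     \<and> (\<forall>r. \<forall>x\<in>I. r * x \<in> I)"

definition two_sided_ideal :: "'a::ring_1 set \<Rightarrow> bool" where
  "two_sided_ideal I \<longleftrightarrow> 0 \<in> I \<and> (\<forall>x\<in>I. \<forall>y\<in>I. x + y \<in> I) \<and> (\<forall>x\<in>I. - x \<in> I)
     \<and> (\<forall>r. \<forall>x\<in>I. r * x \<in> I \<and> x * r \<in> I)"

definition maximal_left_ideal :: "'a::ring_1 set \<Rightarrow> bool" where
  "maximal_left_ideal M \<longleftrightarrow> left_ideal M \<and> M \<noteq> UNIV \<and>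
     (\<forall>K. left_ideal K \<and> M \<subseteq> K \<longrightarrow> K = M \<or> K = UNIV)"

definition maximal_ideal :: "'a::ring_1 set \<Rightarrow> bool" where
  "maximal_ideal M \<longleftrightarrow> two_sided_ideal M \<and> M \<noteq> UNIV \<and>
     (\<forall>K. two_sided_ideal K \<and> M \<subseteq> K \<longrightarrow> K = M \<or> K = UNIV)"

definition jacobson :: "'a::ring_1 set" where
  "jacobson = \<Inter> {M. maximal_left_ideal M}"

text \<open>Two-sided ideal generated by a set; RaR is ideal_gen {a}.\<close>
definition ideal_gen :: "'a::ring_1 set \<Rightarrow> 'a set" where
  "ideal_gen S = \<Inter> {I. two_sided_ideal I \<and> S \<subseteq> I}"

definition full :: "'a::ring_1 \<Rightarrow> bool" where
  "full u \<longleftrightarrow> ideal_gen {u} = UNIV"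

definition corner_in_J :: "'a::ring_1 \<Rightarrow> bool" where
  "corner_in_J e \<longleftrightarrow> (\<forall>r. e * r * (1 - e) \<in> jacobson)"

definition feckly_clean_elem :: "'a::ring_1 \<Rightarrow> bool" where
  "feckly_clean_elem a \<longleftrightarrow> (\<exists>e u. a = e + u \<and> full u \<and> corner_in_J e)"

definition feckly_clean :: "'a::ring_1 itself \<Rightarrow> bool" where
  "feckly_clean _ \<longleftrightarrow> (\<forall>a::'a. feckly_clean_elem a)"

definition MaxSpec :: "'a::ring_1 set set" where
  "MaxSpec = {P. maximal_ideal P}"

definition V :: "'a::ring_1 set \<Rightarrow> 'a set set" where
  "V I = {P \<in> MaxSpec. I \<subseteq> P}"

definition V_elem :: "'a::ring_1 \<Rightarrow> 'a set set" where
  "V_elem a = V (ideal_gen {a})"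

definition max_closed :: "'a::ring_1 set set \<Rightarrow> bool" where
  "max_closed A \<longleftrightarrow> (\<exists>I. two_sided_ideal I \<and> A = V I)"

end

theory Submission imports Defs begin

lemma li_add: "left_ideal I \<Longrightarrow> x \<in> I \<Longrightarrow> y \<in> I \<Longrightarrow> x + y \<in> I"
  unfolding left_ideal_def by simp
lemma li_mult: "left_ideal I \<Longrightarrow> x \<in> I \<Longrightarrow> r * x \<in> I"
  unfolding left_ideal_def by simp
lemma ti_add: "two_sided_ideal I \<Longrightarrow> x \<in> I \<Longrightarrow> y \<in> I \<Longrightarrow> x + y \<in> I"
  unfolding two_sided_ideal_def by simp

lemma zorn_gen:
  assumes QI: "Q I" and nI: "(1::'a::ring_1) \<notin> I"
  and ch: "\<And>C. C \<noteq> {} \<Longrightarrow> subset.chain {K. Q K \<and> I \<subseteq> K \<and> 1 \<notin> K} C \<Longrightarrow> Q (\<Union>C)"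
  shows "\<exists>M. Q M \<and> I \<subseteq> M \<and> 1 \<notin> M \<and> (\<forall>K. Q K \<and> M \<subseteq> K \<longrightarrow> K = M \<or> 1 \<in> K)"
proof -
  define A where "A = {K. Q K \<and> I \<subseteq> K \<and> 1 \<notin> K}"
  have "\<exists>M\<in>A. \<forall>X\<in>A. M \<subseteq> X \<longrightarrow> X = M"
  proof (rule subset_Zorn)
    fix C assume c: "subset.chain A C"
    show "\<exists>U\<in>A. \<forall>X\<in>C. X \<subseteq> U"
    proof (cases "C = {}")
      case True
      have "I \<in> A" unfolding A_def using QI nI by simp
      then show ?thesis using True by blast
    next
      case False
      have "Q (\<Union>C)" using ch[OF False] c unfolding A_def by simp
      moreover have "I \<subseteq> \<Union>C"
      proof -
        obtain X where "X \<in> C" using False by blast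
        then have "I \<subseteq> X" using c unfolding A_def subset_chain_def by blast
        then show ?thesis using \<open>X \<in> C\<close> by blast
      qed
      moreover have "1 \<notin> \<Union>C" using c unfolding A_def subset_chain_def by blast
      ultimately have "\<Union>C \<in> A" unfolding A_def by simp
      then show ?thesis by blast
    qed
  qed
  then obtain M where M: "M \<in> A" "\<forall>X\<in>A. M \<subseteq> X \<longrightarrow> X = M" by blast
  have "\<forall>K. Q K \<and> M \<subseteq> K \<longrightarrow> K = M \<or> 1 \<in> K"
  proof (intro allI impI)
    fix K assume K: "Q K \<and> M \<subseteq> K"
    show "K = M \<or> 1 \<in> K"
    proof (cases "1 \<in> K")
      case False
      have "I \<subseteq> K" using M(1) K unfolding A_def by blast
      then have "K \<in> A" using K False unfolding A_def by simp
      then show ?thesis using M(2) K by blast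
    qed simp
  qed
  then show ?thesis using M(1) unfolding A_def by blast
qed

lemma chain_two: "subset.chain A C \<Longrightarrow> X \<in> C \<Longrightarrow> Y \<in> C \<Longrightarrow> X \<subseteq> Y \<or> Y \<subseteq> X"
  by (auto simp: subset_chain_def)

lemma left_union: assumes "C \<noteq> {}" "\<forall>K\<in>C. left_ideal (K::'a::ring_1 set)"
  "\<forall>X\<in>C. \<forall>Y\<in>C. X \<subseteq> Y \<or> Y \<subseteq> X"
  shows "left_ideal (\<Union>C)"
  unfolding left_ideal_def
proof (intro conjI ballI allI)
  show "0 \<in> \<Union>C" using assms unfolding left_ideal_def by blast
next
  fix x y assume "x \<in> \<Union>C" "y \<in> \<Union>C"
  then obtain X Y where "X \<in> C" "Y \<in> C" "x \<in> X" "y \<in> Y" by blast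
  with assms(3) have "X \<subseteq> Y \<or> Y \<subseteq> X" by blast
  then obtain Z where Z: "Z \<in> C" "x \<in> Z" "y \<in> Z"
    using \<open>X \<in> C\<close> \<open>Y \<in> C\<close> \<open>x \<in> X\<close> \<open>y \<in> Y\<close> by blast
  have "left_ideal Z" using assms(2) Z(1) by blast
  then have "x + y \<in> Z" using Z(2,3) by (rule li_add)
  then show "x + y \<in> \<Union>C" using Z(1) by blast
next
  fix x assume "x \<in> \<Union>C"
  then obtain X where X: "X \<in> C" "x \<in> X" by blast
  have "left_ideal X" using assms(2) X(1) by blast
  then have "- x \<in> X" using X(2) unfolding left_ideal_def by simp
  then show "- x \<in> \<Union>C" using X(1) by blast
next
  fix r x assume "x \<in> \<Union>C"
  then obtain X where X: "X \<in> C" "x \<in> X" by blast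
  have "left_ideal X" using assms(2) X(1) by blast
  then have "r * x \<in> X" using X(2) unfolding left_ideal_def by simp
  then show "r * x \<in> \<Union>C" using X(1) by blast
qed

lemma two_union: assumes "C \<noteq> {}" "\<forall>K\<in>C. two_sided_ideal (K::'a::ring_1 set)"
  "\<forall>X\<in>C. \<forall>Y\<in>C. X \<subseteq> Y \<or> Y \<subseteq> X"
  shows "two_sided_ideal (\<Union>C)"
  unfolding two_sided_ideal_def
proof (intro conjI ballI allI)
  show "0 \<in> \<Union>C" using assms unfolding two_sided_ideal_def by blast
next
  fix x y assume "x \<in> \<Union>C" "y \<in> \<Union>C"
  then obtain X Y where "X \<in> C" "Y \<in> C" "x \<in> X" "y \<in> Y" by blast
  with assms(3) have "X \<subseteq> Y \<or> Y \<subseteq> X" by blast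
  then obtain Z where Z: "Z \<in> C" "x \<in> Z" "y \<in> Z"
    using \<open>X \<in> C\<close> \<open>Y \<in> C\<close> \<open>x \<in> X\<close> \<open>y \<in> Y\<close> by blast
  have "two_sided_ideal Z" using assms(2) Z(1) by blast
  then have "x + y \<in> Z" using Z(2,3) by (rule ti_add)
  then show "x + y \<in> \<Union>C" using Z(1) by blast
next
  fix x assume "x \<in> \<Union>C"
  then obtain X where X: "X \<in> C" "x \<in> X" by blast
  have "two_sided_ideal X" using assms(2) X(1) by blast
  then have "- x \<in> X" using X(2) unfolding two_sided_ideal_def by simp
  then show "- x \<in> \<Union>C" using X(1) by blast
next
  fix r x assume "x \<in> \<Union>C"
  then obtain X where X: "X \<in> C" "x \<in> X" by blast
  have "two_sided_ideal X" using assms(2) X(1) by blast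
  then have "r * x \<in> X" using X(2) unfolding two_sided_ideal_def by simp
  then show "r * x \<in> \<Union>C" using X(1) by blast
next
  fix r x assume "x \<in> \<Union>C"
  then obtain X where X: "X \<in> C" "x \<in> X" by blast
  have "two_sided_ideal X" using assms(2) X(1) by blast
  then have "x * r \<in> X" using X(2) unfolding two_sided_ideal_def by simp
  then show "x * r \<in> \<Union>C" using X(1) by blast
qed

lemma left_UNIV: "left_ideal K \<Longrightarrow> 1 \<in> K \<Longrightarrow> K = UNIV"
proof -
  assume a: "left_ideal K" "1 \<in> K"
  have "x * 1 \<in> K" for x using a unfolding left_ideal_def by blast
  then show "K = UNIV" by auto
qed

lemma two_UNIV: "two_sided_ideal K \<Longrightarrow> 1 \<in> K \<Longrightarrow> K = UNIV"
proof -
  assume a: "two_sided_ideal K" "1 \<in> K"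
  have "x * 1 \<in> K" for x using a unfolding two_sided_ideal_def by blast
  then show "K = UNIV" by auto
qed

lemma exists_max_ideal:
  assumes "two_sided_ideal (I::'a::ring_1 set)" "I \<noteq> UNIV"
  shows "\<exists>P. maximal_ideal P \<and> I \<subseteq> P"
proof -
  have "1 \<notin> I" using assms two_UNIV by blast
  have "\<exists>M. two_sided_ideal M \<and> I \<subseteq> M \<and> 1 \<notin> M \<and> (\<forall>K. two_sided_ideal K \<and> M \<subseteq> K \<longrightarrow> K = M \<or> 1 \<in> K)"
  proof (rule zorn_gen[of two_sided_ideal I, OF assms(1) \<open>1 \<notin> I\<close>])
    fix C assume "C \<noteq> {}" "subset.chain {K. two_sided_ideal K \<and> I \<subseteq> K \<and> 1 \<notin> K} C"
    then show "two_sided_ideal (\<Union>C)"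
      by (intro two_union) (auto simp: subset_chain_def)
  qed
  then obtain M where M: "two_sided_ideal M" "I \<subseteq> M" "1 \<notin> M"
    "\<forall>K. two_sided_ideal K \<and> M \<subseteq> K \<longrightarrow> K = M \<or> 1 \<in> K" by blast
  then have "maximal_ideal M" unfolding maximal_ideal_def using two_UNIV by blast
  with M show ?thesis by blast
qed

lemma exists_max_left:
  assumes "left_ideal (I::'a::ring_1 set)" "I \<noteq> UNIV"
  shows "\<exists>P. maximal_left_ideal P \<and> I \<subseteq> P"
proof -
  have "1 \<notin> I" using assms left_UNIV by blast
  have "\<exists>M. left_ideal M \<and> I \<subseteq> M \<and> 1 \<notin> M \<and> (\<forall>K. left_ideal K \<and> M \<subseteq> K \<longrightarrow> K = M \<or> 1 \<in> K)"
  proof (rule zorn_gen[of left_ideal I, OF assms(1) \<open>1 \<notin> I\<close>])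
    fix C assume "C \<noteq> {}" "subset.chain {K. left_ideal K \<and> I \<subseteq> K \<and> 1 \<notin> K} C"
    then show "left_ideal (\<Union>C)"
      by (intro left_union) (auto simp: subset_chain_def)
  qed
  then obtain M where M: "left_ideal M" "I \<subseteq> M" "1 \<notin> M"
    "\<forall>K. left_ideal K \<and> M \<subseteq> K \<longrightarrow> K = M \<or> 1 \<in> K" by blast
  then have "maximal_left_ideal M" unfolding maximal_left_ideal_def using left_UNIV by blast
  with M show ?thesis by blast
qed


lemma ideal_gen_ideal: "two_sided_ideal (ideal_gen S)"
  unfolding ideal_gen_def two_sided_ideal_def by blast

lemma ideal_gen_sub: "S \<subseteq> ideal_gen S"
  unfolding ideal_gen_def by blast

lemma ideal_gen_least: "two_sided_ideal I \<Longrightarrow> S \<subseteq> I \<Longrightarrow> ideal_gen S \<subseteq> I"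
  unfolding ideal_gen_def by blast

lemma ideal_diff: "two_sided_ideal I \<Longrightarrow> x \<in> I \<Longrightarrow> y \<in> I \<Longrightarrow> x - y \<in> I"
  unfolding two_sided_ideal_def by (simp only: diff_conv_add_uminus)

lemma max_1: "maximal_ideal P \<Longrightarrow> 1 \<notin> P"
  unfolding maximal_ideal_def using two_UNIV by blast

lemma V_elem_iff: "P \<in> V_elem a \<longleftrightarrow> maximal_ideal P \<and> a \<in> P"
proof
  assume "P \<in> V_elem a"
  then show "maximal_ideal P \<and> a \<in> P" unfolding V_elem_def V_def MaxSpec_def
    using ideal_gen_sub by blast
next
  assume "maximal_ideal P \<and> a \<in> P"
  then show "P \<in> V_elem a" unfolding V_elem_def V_def MaxSpec_def
    using ideal_gen_least maximal_ideal_def by blast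
qed

lemma full_iff: "full u \<longleftrightarrow> (\<forall>P. maximal_ideal P \<longrightarrow> u \<notin> P)"
proof
  assume "full u"
  then show "\<forall>P. maximal_ideal P \<longrightarrow> u \<notin> P" unfolding full_def
    using ideal_gen_least max_1 maximal_ideal_def by blast
next
  assume a: "\<forall>P. maximal_ideal P \<longrightarrow> u \<notin> P"
  show "full u"
  proof (rule ccontr)
    assume "\<not> full u"
    then have "ideal_gen {u} \<noteq> UNIV" by (simp add: full_def)
    then obtain P where "maximal_ideal P" "ideal_gen {u} \<subseteq> P"
      using exists_max_ideal[OF ideal_gen_ideal] by blast
    then show False using a ideal_gen_sub by blast
  qed
qed

lemma prime_max:
  assumes P: "maximal_ideal P" and h: "\<forall>r. a * r * b \<in> P"
  shows "a \<in> P \<or> b \<in> P"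
proof (rule ccontr)
  assume na: "\<not> (a \<in> P \<or> b \<in> P)"
  let ?Q = "{x. \<forall>r. x * r * b \<in> P}"
  have PI: "two_sided_ideal P" using P maximal_ideal_def by blast
  have "two_sided_ideal ?Q" unfolding two_sided_ideal_def
  proof (intro conjI ballI allI)
    show "0 \<in> ?Q" using PI by (simp add: two_sided_ideal_def)
  next
    fix x y assume "x \<in> ?Q" "y \<in> ?Q"
    then show "x + y \<in> ?Q" using PI unfolding two_sided_ideal_def
      by (simp add: distrib_right)
  next
    fix x assume "x \<in> ?Q"
    then show "- x \<in> ?Q" using PI unfolding two_sided_ideal_def by simp
  next
    fix s x assume "x \<in> ?Q"
    then show "s * x \<in> ?Q" using PI unfolding two_sided_ideal_def
      by (simp add: mult.assoc)
    { fix r have "x * (s * r) * b \<in> P" using \<open>x \<in> ?Q\<close> by blast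
      then have "x * s * r * b \<in> P" by (simp add: mult.assoc) }
    then show "x * s \<in> ?Q" by simp
  qed
  moreover have "P \<subseteq> ?Q" using PI unfolding two_sided_ideal_def by blast
  moreover have "?Q \<noteq> P" using h na by auto
  ultimately have "?Q = UNIV" using P unfolding maximal_ideal_def by blast
  then have "1 \<in> ?Q" by blast
  then have "1 * 1 * b \<in> P" by blast
  then have "b \<in> P" by simp
  then show False using na by blast
qed

lemma max_left_span:
  assumes M: "maximal_left_ideal M" and b: "b \<notin> M"
  shows "\<exists>s. \<exists>m\<in>M. x = s * b + m"
proof -
  let ?L = "{s * b + m | s m. m \<in> M}"
  have HLM: "left_ideal M" using M maximal_left_ideal_def by blast
  have "left_ideal ?L" unfolding left_ideal_def
  proof (intro conjI ballI allI)
    show "0 \<in> ?L" using HLM by (auto simp: left_ideal_def intro!: exI[of _ 0])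
  next
    fix x y assume "x \<in> ?L" "y \<in> ?L"
    then obtain s m t n where "x = s*b+m" "y = t*b+n" "m\<in>M" "n\<in>M" by blast
    then have "x + y = (s+t)*b + (m+n)" "m + n \<in> M" using HLM
      by (auto simp: algebra_simps left_ideal_def)
    then show "x + y \<in> ?L" by blast
  next
    fix x assume "x \<in> ?L"
    then obtain s m where "x = s*b+m" "m\<in>M" by blast
    then have "-x = (-s)*b + (-m)" "-m \<in> M" using HLM
      by (auto simp: algebra_simps left_ideal_def)
    then show "-x \<in> ?L" by blast
  next
    fix r x assume "x \<in> ?L"
    then obtain s m where "x = s*b+m" "m\<in>M" by blast
    then have "r*x = (r*s)*b + (r*m)" "r*m \<in> M" using HLM
      by (auto simp: algebra_simps left_ideal_def)
    then show "r*x \<in> ?L" by blast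
  qed
  moreover have "M \<subseteq> ?L" by (force intro: exI[of _ 0])
  moreover have "b \<in> ?L" using HLM by (force simp: left_ideal_def intro: exI[of _ 1])
  ultimately have "?L = UNIV" using M b unfolding maximal_left_ideal_def by blast
  then show ?thesis by blast
qed

lemma jac_right:
  assumes j: "j \<in> jacobson" and M: "maximal_left_ideal M"
  shows "j * r \<in> M"
proof (cases "r \<in> M")
  case True
  have "left_ideal M" using M unfolding maximal_left_ideal_def by simp
  then show ?thesis using True by (rule li_mult)
next
  case False
  let ?M' = "{x. x * r \<in> M}"
  have HLM: "left_ideal M" using M maximal_left_ideal_def by blast
  have LI: "left_ideal ?M'" using HLM unfolding left_ideal_def
    by (simp add: distrib_right mult.assoc)
  have "maximal_left_ideal ?M'" unfolding maximal_left_ideal_def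
  proof (intro conjI allI impI)
    show "left_ideal ?M'" by (rule LI)
    have "1 \<notin> ?M'" using False by simp
    then show "?M' \<noteq> UNIV" by blast
    fix K assume K: "left_ideal K \<and> ?M' \<subseteq> K"
    show "K = ?M' \<or> K = UNIV"
    proof (cases "K = ?M'")
      case False
      then obtain k where k: "k \<in> K" "k * r \<notin> M" using K by blast
      have "x \<in> K" for x
      proof -
        obtain s m where sm: "m \<in> M" "x * r = s * (k * r) + m"
          using max_left_span[OF M k(2)] by blast
        then have "(x - s * k) * r \<in> M" by (simp add: algebra_simps)
        then have "x - s * k \<in> K" using K by blast
        moreover have "s * k \<in> K" using K k unfolding left_ideal_def by blast
        ultimately have "(x - s * k) + s * k \<in> K" using K unfolding left_ideal_def by blast
        then show ?thesis by simp
      qed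
      then show ?thesis by blast
    qed simp
  qed
  then have "j \<in> ?M'" using j unfolding jacobson_def by blast
  then show ?thesis by simp
qed

lemma jac_sub_max:
  fixes P :: "'a::ring_1 set"
  assumes P: "maximal_ideal P"
  shows "jacobson \<subseteq> P"
proof
  fix j :: 'a assume j: "j \<in> jacobson"
  have PI: "two_sided_ideal P" using P maximal_ideal_def by blast
  have "left_ideal P" using PI unfolding two_sided_ideal_def left_ideal_def by blast
  then obtain M where M: "maximal_left_ideal M" "P \<subseteq> M"
    using exists_max_left P maximal_ideal_def by blast
  let ?Q = "{x. \<forall>r. x * r \<in> M}"
  have HLM: "left_ideal M" using M maximal_left_ideal_def by blast
  have "two_sided_ideal ?Q" using HLM unfolding two_sided_ideal_def left_ideal_def
    by (simp add: distrib_right mult.assoc)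
  moreover have "P \<subseteq> ?Q" using PI M unfolding two_sided_ideal_def by blast
  moreover have "1 \<notin> ?Q" using M unfolding maximal_left_ideal_def using left_UNIV by force
  ultimately have "?Q = P" using P unfolding maximal_ideal_def by blast
  moreover have "j \<in> ?Q" using jac_right[OF j M(1)] by blast
  ultimately show "j \<in> P" by blast
qed

lemma corner_split:
  assumes "corner_in_J e" "maximal_ideal P"
  shows "e \<in> P \<or> 1 - e \<in> P"
  using prime_max[OF assms(2)] assms jac_sub_max unfolding corner_in_J_def by blast


lemma V_iff: "P \<in> V I \<longleftrightarrow> maximal_ideal P \<and> I \<subseteq> P"
  unfolding V_def MaxSpec_def by blast

lemma closed_elem: "max_closed (V_elem a)"
  unfolding max_closed_def V_elem_def using ideal_gen_ideal by blast

lemma disj_elem: "V_elem a \<inter> V_elem (1 - a) = {}"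
proof -
  { fix P assume "maximal_ideal P" "a \<in> P" "1 - a \<in> P"
    moreover have "two_sided_ideal P" using \<open>maximal_ideal P\<close> by (simp add: maximal_ideal_def)
    ultimately have "a + (1 - a) \<in> P" using ti_add by blast
    then have False using max_1[OF \<open>maximal_ideal P\<close>] by simp }
  then show ?thesis using V_elem_iff by blast
qed

lemma one_to_three:
  assumes "feckly_clean TYPE('a::ring_1)"
  shows "\<exists>e. V_elem (a::'a) \<subseteq> V_elem e \<and> V_elem (1 - a) \<subseteq> V_elem (1 - e) \<and> corner_in_J e"
proof -
  obtain e u where eu: "1 - a = e + u" "full u" "corner_in_J e"
    using assms unfolding feckly_clean_def feckly_clean_elem_def by blast
  have u: "maximal_ideal P \<Longrightarrow> u \<notin> P" for P using eu full_iff by blast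
  have "V_elem a \<subseteq> V_elem e"
  proof
    fix P assume "P \<in> V_elem a"
    then have P: "maximal_ideal P" "a \<in> P" using V_elem_iff by blast+
    have "e \<in> P"
    proof (rule ccontr)
      assume "e \<notin> P"
      then have "1 - e \<in> P" using corner_split eu P by blast
      then have "(1 - e) - a \<in> P" using ideal_diff P maximal_ideal_def by blast
      moreover have "(1 - e) - a = u" using eu(1) by (simp add: algebra_simps)
      ultimately show False using u P by simp
    qed
    then show "P \<in> V_elem e" using P V_elem_iff by blast
  qed
  moreover have "V_elem (1 - a) \<subseteq> V_elem (1 - e)"
  proof
    fix P assume "P \<in> V_elem (1 - a)"
    then have P: "maximal_ideal P" "1 - a \<in> P" using V_elem_iff by blast+
    have "1 - e \<in> P"
    proof (rule ccontr)
      assume "1 - e \<notin> P"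
      then have "e \<in> P" using corner_split eu P by blast
      then have "(1 - a) - e \<in> P" using ideal_diff P maximal_ideal_def by blast
      moreover have "(1 - a) - e = u" using eu(1) by (simp add: algebra_simps)
      ultimately show False using u P by simp
    qed
    then show "P \<in> V_elem (1 - e)" using P V_elem_iff by blast
  qed
  ultimately show ?thesis using eu by blast
qed

lemma two_to_one:
  assumes "\<forall>A B :: 'a::ring_1 set set. max_closed A \<and> max_closed B \<and> A \<inter> B = {} \<longrightarrow>
              (\<exists>e. A \<subseteq> V_elem e \<and> B \<subseteq> V_elem (1 - e) \<and> corner_in_J e)"
  shows "feckly_clean TYPE('a)"
  unfolding feckly_clean_def feckly_clean_elem_def
proof
  fix a :: 'a
  have "V_elem (1 - a) \<inter> V_elem (1 - (1 - a)) = {}" by (rule disj_elem)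
  then have "V_elem (1 - a) \<inter> V_elem a = {}" by simp
  then obtain e where e: "V_elem (1 - a) \<subseteq> V_elem e" "V_elem a \<subseteq> V_elem (1 - e)" "corner_in_J e"
    using assms closed_elem by blast
  have "full (a - e)" unfolding full_iff
  proof (intro allI impI notI)
    fix P assume P: "maximal_ideal P" "a - e \<in> P"
    have PI: "two_sided_ideal P" using P maximal_ideal_def by blast
    show False
    proof (cases "e \<in> P")
      case True
      have "(a - e) + e \<in> P" using PI P True unfolding two_sided_ideal_def by blast
      then have "a \<in> P" by simp
      then have "1 - e \<in> P" using e(2) V_elem_iff P by blast
      then have "(1 - e) + e \<in> P" using PI True unfolding two_sided_ideal_def by blast
      then show False using max_1[OF P(1)] by simp
    next
      case False
      then have "1 - e \<in> P" using corner_split e P by blast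
      then have "(1 - e) - (a - e) \<in> P" using ideal_diff PI P by blast
      then have "1 - a \<in> P" by (simp add: algebra_simps)
      then have "e \<in> P" using e(1) V_elem_iff P by blast
      then show False using False by blast
    qed
  qed
  moreover have "a = e + (a - e)" by simp
  ultimately show "\<exists>e u. a = e + u \<and> full u \<and> corner_in_J e" using e(3) by blast
qed

lemma three_to_two:
  assumes h: "\<forall>a::'a::ring_1. \<exists>e. V_elem a \<subseteq> V_elem e \<and> V_elem (1 - a) \<subseteq> V_elem (1 - e)
                              \<and> corner_in_J e"
  shows "\<forall>A B :: 'a set set. max_closed A \<and> max_closed B \<and> A \<inter> B = {} \<longrightarrow>
              (\<exists>e. A \<subseteq> V_elem e \<and> B \<subseteq> V_elem (1 - e) \<and> corner_in_J e)"
proof (intro allI impI)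
  fix A B :: "'a set set"
  assume ab: "max_closed A \<and> max_closed B \<and> A \<inter> B = {}"
  then obtain I K where IK: "two_sided_ideal I" "A = V I" "two_sided_ideal K" "B = V K"
    unfolding max_closed_def by blast
  let ?S = "{i + k | i k. i \<in> I \<and> k \<in> K}"
  have I0: "0 \<in> I" and K0: "0 \<in> K" using IK by (simp_all add: two_sided_ideal_def)
  have S1: "two_sided_ideal ?S" unfolding two_sided_ideal_def
  proof (intro conjI ballI allI)
    have "0 + 0 \<in> ?S" using I0 K0 by blast
    then show "0 \<in> ?S" by simp
  next
    fix x y assume "x \<in> ?S" "y \<in> ?S"
    then obtain i k i' k' where "x = i + k" "y = i' + k'" "i \<in> I" "k \<in> K" "i' \<in> I" "k' \<in> K" by blast
    then have "x + y = (i + i') + (k + k')" "i + i' \<in> I" "k + k' \<in> K"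
      using IK by (auto simp: algebra_simps two_sided_ideal_def)
    then show "x + y \<in> ?S" by blast
  next
    fix x assume "x \<in> ?S"
    then obtain i k where "x = i + k" "i \<in> I" "k \<in> K" by blast
    then have "- x = (- i) + (- k)" "- i \<in> I" "- k \<in> K"
      using IK by (auto simp: algebra_simps two_sided_ideal_def)
    then show "- x \<in> ?S" by blast
  next
    fix r x assume "x \<in> ?S"
    then obtain i k where "x = i + k" "i \<in> I" "k \<in> K" by blast
    then have "r * x = (r * i) + (r * k)" "r * i \<in> I" "r * k \<in> K"
      using IK by (auto simp: algebra_simps two_sided_ideal_def)
    then show "r * x \<in> ?S" by blast
  next
    fix r x assume "x \<in> ?S"
    then obtain i k where "x = i + k" "i \<in> I" "k \<in> K" by blast
    then have "x * r = (i * r) + (k * r)" "i * r \<in> I" "k * r \<in> K"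
      using IK by (auto simp: algebra_simps two_sided_ideal_def)
    then show "x * r \<in> ?S" by blast
  qed
  have S2: "I \<subseteq> ?S"
  proof
    fix x assume "x \<in> I"
    then have "x + 0 \<in> ?S" using K0 by blast
    then show "x \<in> ?S" by simp
  qed
  have S3: "K \<subseteq> ?S"
  proof
    fix x assume "x \<in> K"
    then have "0 + x \<in> ?S" using I0 by blast
    then show "x \<in> ?S" by simp
  qed
  have "?S = UNIV"
  proof (rule ccontr)
    assume "?S \<noteq> UNIV"
    then obtain P where P: "maximal_ideal P" "?S \<subseteq> P" using exists_max_ideal[OF S1] by blast
    then have "I \<subseteq> P" "K \<subseteq> P" using S2 S3 by blast+
    then have "P \<in> A" "P \<in> B" using P(1) IK(2,4) V_iff by blast+
    then show False using ab by blast
  qed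
  then have "1 \<in> ?S" by blast
  then obtain i k where ik: "1 = i + k" "i \<in> I" "k \<in> K" by blast
  obtain e where e: "V_elem i \<subseteq> V_elem e" "V_elem (1 - i) \<subseteq> V_elem (1 - e)" "corner_in_J e"
    using h by blast
  have "1 - i = k" using ik(1) by (simp add: algebra_simps)
  have "A \<subseteq> V_elem e"
  proof
    fix P assume "P \<in> A"
    then have P: "maximal_ideal P" "I \<subseteq> P" using IK(2) V_iff by auto
    then have "i \<in> P" using ik(2) by blast
    then have "P \<in> V_elem i" using P(1) V_elem_iff by blast
    then show "P \<in> V_elem e" using e(1) by blast
  qed
  moreover have "B \<subseteq> V_elem (1 - e)"
  proof
    fix P assume "P \<in> B"
    then have P: "maximal_ideal P" "K \<subseteq> P" using IK(4) V_iff by auto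
    then have "1 - i \<in> P" using ik(3) \<open>1 - i = k\<close> by blast
    then have "P \<in> V_elem (1 - i)" using P(1) V_elem_iff by blast
    then show "P \<in> V_elem (1 - e)" using e(2) by blast
  qed
  ultimately show "\<exists>e. A \<subseteq> V_elem e \<and> B \<subseteq> V_elem (1 - e) \<and> corner_in_J e" using e(3) by blast
qed

theorem theorem2p3:
  shows "(feckly_clean TYPE('a::ring_1) \<longleftrightarrow>
           (\<forall>A B :: 'a set set. max_closed A \<and> max_closed B \<and> A \<inter> B = {} \<longrightarrow>
              (\<exists>e. A \<subseteq> V_elem e \<and> B \<subseteq> V_elem (1 - e) \<and> corner_in_J e)))
       \<and> ((\<forall>A B :: 'a set set. max_closed A \<and> max_closed B \<and> A \<inter> B = {} \<longrightarrow>
              (\<exists>e. A \<subseteq> V_elem e \<and> B \<subseteq> V_elem (1 - e) \<and> corner_in_J e))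
          \<longleftrightarrow> (\<forall>a::'a. \<exists>e. V_elem a \<subseteq> V_elem e \<and> V_elem (1 - a) \<subseteq> V_elem (1 - e)
                              \<and> corner_in_J e))"
proof (intro conjI iffI)
  assume F: "feckly_clean TYPE('a)"
  have "\<forall>a::'a. \<exists>e. V_elem a \<subseteq> V_elem e \<and> V_elem (1 - a) \<subseteq> V_elem (1 - e) \<and> corner_in_J e"
    using one_to_three[OF F] by (intro allI)
  then show "\<forall>A B :: 'a set set. max_closed A \<and> max_closed B \<and> A \<inter> B = {} \<longrightarrow>
              (\<exists>e. A \<subseteq> V_elem e \<and> B \<subseteq> V_elem (1 - e) \<and> corner_in_J e)"
    by (rule three_to_two)
next
  assume "\<forall>A B :: 'a set set. max_closed A \<and> max_closed B \<and> A \<inter> B = {} \<longrightarrow>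
              (\<exists>e. A \<subseteq> V_elem e \<and> B \<subseteq> V_elem (1 - e) \<and> corner_in_J e)"
  then show "feckly_clean TYPE('a)" by (rule two_to_one)
next
  assume "\<forall>A B :: 'a set set. max_closed A \<and> max_closed B \<and> A \<inter> B = {} \<longrightarrow>
              (\<exists>e. A \<subseteq> V_elem e \<and> B \<subseteq> V_elem (1 - e) \<and> corner_in_J e)"
  then have F: "feckly_clean TYPE('a)" by (rule two_to_one)
  show "\<forall>a::'a. \<exists>e. V_elem a \<subseteq> V_elem e \<and> V_elem (1 - a) \<subseteq> V_elem (1 - e) \<and> corner_in_J e"
    using one_to_three[OF F] by (intro allI)
next
  assume "\<forall>a::'a. \<exists>e. V_elem a \<subseteq> V_elem e \<and> V_elem (1 - a) \<subseteq> V_elem (1 - e) \<and> corner_in_J e"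
  then show "\<forall>A B :: 'a set set. max_closed A \<and> max_closed B \<and> A \<inter> B = {} \<longrightarrow>
              (\<exists>e. A \<subseteq> V_elem e \<and> B \<subseteq> V_elem (1 - e) \<and> corner_in_J e)"
    by (rule three_to_two)
qed

end
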